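(* Let $T\ge1$, $n\ge1$ with $nT\ge2$, $\mu\in\mathbb{R}$, $\sigma>0$, $z^*\in\mathbb{R}$, $\tau\in\{1,\dots,T\}$. Under $\mathbf{H_0}$ the real numbers $X_{t,k}$ ($t\le T$, $k\le n$) are i.i.d. $\mathcal{N}(\mu,\sigma^2)$; under $\mathbf{H_1^\tau}$ they are generated the same way and then $X_{\tau,J}$ is replaced by $z^*$, with $J$ uniform on $\{1,\dots,n\}$ independent of the data. Let $\hat\mu_T=\frac{1}{nT}\sum_{t=1}^T\sum_{k=1}^nX_{t,k}$, $W=\hat\mu_T-\mu$, and define the final-observation statistic \[ L_{\mathrm{FO}}=-\frac12\log\Big(\frac{nT-1}{nT}\Big)-\frac{nT}{2(nT-1)\sigma^2}W^2+\frac{nT(z^*-\mu)}{(nT-1)\sigma^2}W-\frac{(z^*-\mu)^2}{2(nT-1)\sigma^2}. \] Let $\alpha_{\mathrm{FO}}(\gamma)=\mathbb{P}_{\mathbf{H_0}}(L_{\mathrm{FO}}\ge\gamma)$, $\gamma^{(T)}_{\max}=\frac12\big[\frac{(z^*-\mu)^2}{\sigma^2}-\log\big(\frac{nT-1}{nT}\big)\big]$, $m^*=\frac{(z^*-\mu)^2}{\sigma^2}$, $a_T=\sqrt{m^*nT}$, and $b_T(\gamma)=\sqrt{(nT-1)\big(m^*-\log(1-\frac1{nT})-2\gamma\big)}$. Then for every $\gamma\le\gamma^{(T)}_{\max}$, \[ \alpha_{\mathrm{FO}}(\gamma)=\Phi(a_T+b_T(\gamma))-\Phi(a_T-b_T(\gamma)),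 \] where $\Phi$ is the standard normal cumulative distribution function.
   Context: $L_{\mathrm{FO}}$ is the log likelihood ratio statistic of a membership test that only observes the final cumulative mean $\hat\mu_T$; $\alpha_{\mathrm{FO}}(\gamma)$ is its Type I error at threshold $\gamma$. *)

theory Defs
  imports "HOL-Probability.Probability"
begin

definition Phi :: "real \<Rightarrow> real" where
  "Phi x = cdf (density lborel std_normal_density) x"

definition idx :: "nat \<Rightarrow> nat \<Rightarrow> (nat \<times> nat) set" where
  "idx T n = {1..T} \<times> {1..n}"

definition H0_law :: "nat \<Rightarrow> nat \<Rightarrow> real \<Rightarrow> real \<Rightarrow> ((nat \<times> nat) \<Rightarrow> real) measure" where
  "H0_law T n \<mu> \<sigma> = PiM (idx T n) (\<lambda>_. density lborel (normal_density \<mu> \<sigma>))"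

definition mu_hat :: "nat \<Rightarrow> nat \<Rightarrow> ((nat \<times> nat) \<Rightarrow> real) \<Rightarrow> real" where
  "mu_hat T n X = (1 / (real n * real T)) * (\<Sum>t=1..T. \<Sum>k=1..n. X (t, k))"

definition L_FO :: "nat \<Rightarrow> nat \<Rightarrow> real \<Rightarrow> real \<Rightarrow> real \<Rightarrow> ((nat \<times> nat) \<Rightarrow> real) \<Rightarrow> real" where
  "L_FO T n \<mu> \<sigma> zs X =
    (let N = real n * real T; W = mu_hat T n X - \<mu> in
      - (1/2) * ln ((N - 1) / N)
      - N / (2 * (N - 1) * \<sigma>\<^sup>2) * W\<^sup>2
      + N * (zs - \<mu>) / ((N - 1) * \<sigma>\<^sup>2) * W
      - (zs - \<mu>)\<^sup>2 / (2 * (N - 1) * \<sigma>\<^sup>2))"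

definition alpha_FO :: "nat \<Rightarrow> nat \<Rightarrow> real \<Rightarrow> real \<Rightarrow> real \<Rightarrow> real \<Rightarrow> real" where
  "alpha_FO T n \<mu> \<sigma> zs \<gamma> =
    measure (H0_law T n \<mu> \<sigma>) {X \<in> space (H0_law T n \<mu> \<sigma>). L_FO T n \<mu> \<sigma> zs X \<ge> \<gamma>}"

end

theory Submission
  imports Defs
begin

lemma std_interval:
  assumes "prob_space M" and Y: "distributed M lborel Y std_normal_density" and "u \<le> v"
  shows "measure M {x \<in> space M. u \<le> Y x \<and> Y x \<le> v}
     = cdf (density lborel std_normal_density) v - cdf (density lborel std_normal_density) u"
proof -
  interpret M: prob_space M by fact
  let ?D = "density lborel std_normal_density"
  
  interpret D: real_distribution ?D by (rule real_dist_normal_dist)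
  have meas: "Y \<in> measurable M lborel" using Y by (simp add: distributed_def)
  have dd: "distr M lborel Y = ?D" using Y by (simp add: distributed_def)
  have "measure M {x \<in> space M. u \<le> Y x \<and> Y x \<le> v} = measure M (Y -` {u..v} \<inter> space M)"
    by (rule arg_cong[where f="measure M"]) auto
  also have "\<dots> = measure (distr M lborel Y) {u..v}"
    by (rule measure_distr[symmetric]) (use meas in auto)
  also have "\<dots> = measure ?D {u..v}" by (simp add: dd)
  also have "\<dots> = measure ?D {u<..v}"
  proof -
    have ae: "AE x in lborel. x \<in> {u} \<longrightarrow> ennreal (std_normal_density x) = 0"
      using AE_lborel_singleton[of u] by (rule AE_mp) (auto intro!: AE_I2)
    have n: "{u} \<in> null_sets ?D"
      using null_sets_density_iff[where M=lborel and f="\<lambda>x. ennreal (std_normal_density x)" and A="{u}"] ae by simp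
    have "{u..v} = {u} \<union> {u<..v}" using assms(3) by auto
    then have "{u..v} = {u<..v} \<union> {u}" by auto
    moreover have "measure ?D ({u<..v} \<union> {u}) = measure ?D {u<..v}"
      by (rule measure_Un_null_set[OF _ n]) simp
    ultimately show ?thesis by simp
  qed
  also have "\<dots> = cdf ?D v - cdf ?D u"
    using assms(3) by (cases "u = v") (auto simp: D.cdf_diff_eq)
  finally show ?thesis .
qed
lemma sum_coords_normal:
  fixes I :: "'i set" and \<mu> \<sigma> :: real
  assumes fin: "finite I" and ne: "I \<noteq> {}" and sp: "\<sigma> > 0"
  defines "N0 \<equiv> density lborel (normal_density \<mu> \<sigma>)"
  shows "distributed (PiM I (\<lambda>_. N0)) lborel (\<lambda>x. \<Sum>i\<in>I. x i)
           (normal_density (\<Sum>i\<in>I. \<mu>) (sqrt (\<Sum>i\<in>I. \<sigma>\<^sup>2)))"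
proof -
  have pN0: "prob_space N0" unfolding N0_def by (rule prob_space_normal_density) (rule sp)
  let ?M = "PiM I (\<lambda>_. N0)"
  interpret M: prob_space ?M by (rule prob_space_PiM) (use pN0 in auto)
  have sN0: "sets N0 = sets borel" unfolding N0_def by simp
  have comp: "distr ?M lborel (\<lambda>x. x i) = N0" if "i \<in> I" for i
  proof -
    have "distr ?M lborel (\<lambda>x. x i) = distr ?M N0 (\<lambda>x. x i)"
      by (rule distr_cong) (auto simp: sN0)
    also have "\<dots> = N0" by (rule distr_PiM_component) (use pN0 that in auto)
    finally show ?thesis .
  qed
  have compb: "distr ?M borel (\<lambda>x. x i) = N0" if "i \<in> I" for i
  proof -
    have "distr ?M borel (\<lambda>x. x i) = distr ?M N0 (\<lambda>x. x i)"
      by (rule distr_cong) (auto simp: sN0)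
    also have "\<dots> = N0" by (rule distr_PiM_component) (use pN0 that in auto)
    finally show ?thesis .
  qed
  have meas: "(\<lambda>x. x i) \<in> measurable ?M borel" if "i \<in> I" for i
    using measurable_component_singleton[OF that, of "\<lambda>_. N0"] 
    by (simp add: measurable_def sN0)
  have ind: "M.indep_vars (\<lambda>_. borel) (\<lambda>i x. x i) I"
  proof (subst M.indep_vars_iff_distr_eq_PiM'[OF ne])
    show "\<And>i. i \<in> I \<Longrightarrow> (\<lambda>x. x i) \<in> measurable ?M borel" using meas by auto
    have "(\<Pi>\<^sub>M i\<in>I. distr ?M borel (\<lambda>x. x i)) = (\<Pi>\<^sub>M i\<in>I. N0)"
      by (rule PiM_cong) (auto simp: compb)
    moreover have "distr ?M (\<Pi>\<^sub>M i\<in>I. borel) (\<lambda>x. \<lambda>i\<in>I. x i) = distr ?M (\<Pi>\<^sub>M i\<in>I. N0) (\<lambda>x. x)"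
      by (rule distr_cong) (auto simp: sN0 space_PiM intro!: sets_PiM_cong)
    moreover have "distr ?M (\<Pi>\<^sub>M i\<in>I. N0) (\<lambda>x. x) = ?M" by (rule distr_id2) simp
    ultimately show "distr ?M (\<Pi>\<^sub>M i\<in>I. borel) (\<lambda>x. \<lambda>i\<in>I. x i) = (\<Pi>\<^sub>M i\<in>I. distr ?M borel (\<lambda>x. x i))"
      by simp
  qed
  have dist: "distributed ?M lborel (\<lambda>x. x i) (normal_density \<mu> \<sigma>)" if "i \<in> I" for i
    unfolding distributed_def using comp[OF that] meas[OF that] by (auto simp: N0_def)
  show ?thesis
    by (rule M.sum_indep_normal[OF fin ne ind]) (use sp dist in auto)
qed
lemma alg:
  fixes N \<sigma> d \<gamma> Z :: real
  assumes N: "N > 1" and sp: "\<sigma> > 0"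
    and K: "0 \<le> d\<^sup>2/\<sigma>\<^sup>2 - ln ((N-1)/N) - 2*\<gamma>"
  shows "(\<gamma> \<le> - (1/2) * ln ((N - 1) / N) - N / (2 * (N - 1) * \<sigma>\<^sup>2) * (\<sigma>*Z/sqrt N)\<^sup>2
      + N * d / ((N - 1) * \<sigma>\<^sup>2) * (\<sigma>*Z/sqrt N) - d\<^sup>2 / (2 * (N - 1) * \<sigma>\<^sup>2))
     \<longleftrightarrow> (d * sqrt N/\<sigma> - sqrt ((N-1)*(d\<^sup>2/\<sigma>\<^sup>2 - ln (1 - 1/N) - 2*\<gamma>)) \<le> Z \<and>
          Z \<le> d * sqrt N/\<sigma> + sqrt ((N-1)*(d\<^sup>2/\<sigma>\<^sup>2 - ln (1 - 1/N) - 2*\<gamma>)))"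
proof -
  define lg where "lg = ln ((N-1)/N)"
  define c where "c = d * sqrt N/\<sigma>"
  define Kv where "Kv = d\<^sup>2/\<sigma>\<^sup>2 - lg - 2*\<gamma>"
  have l1: "ln (1 - 1/N) = lg" unfolding lg_def using N by (simp add: field_simps)
  have sN: "sqrt N > 0" using N by simp
  have sN2: "(sqrt N)\<^sup>2 = N" using N by simp
  have "- (1/2) * lg - N / (2 * (N - 1) * \<sigma>\<^sup>2) * (\<sigma>*Z/sqrt N)\<^sup>2
      + N * d / ((N - 1) * \<sigma>\<^sup>2) * (\<sigma>*Z/sqrt N) - d\<^sup>2 / (2 * (N - 1) * \<sigma>\<^sup>2) - \<gamma>
      = ((N-1)*Kv - (Z - c)\<^sup>2) / (2*(N-1))"
  proof -
    have e1: "N / (2 * (N - 1) * \<sigma>\<^sup>2) * (\<sigma>*Z/sqrt N)\<^sup>2 = Z\<^sup>2/(2*(N-1))"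
      using N sp sN2 by (simp add: power_divide power_mult_distrib field_simps)
    have e2: "N * d / ((N - 1) * \<sigma>\<^sup>2) * (\<sigma>*Z/sqrt N) = c*Z/(N-1)"
      unfolding c_def using N sp sN sN2
      by (simp add: field_simps power2_eq_square)
    have e3: "c\<^sup>2 = d\<^sup>2/\<sigma>\<^sup>2 * N" unfolding c_def using sN2 by (simp add: power_divide power_mult_distrib)
    have e4: "d\<^sup>2 / (2 * (N - 1) * \<sigma>\<^sup>2) = (c\<^sup>2/N)/(2*(N-1))"
      using e3 N sp by (simp add: field_simps)
    have e5: "d\<^sup>2/\<sigma>\<^sup>2 = c\<^sup>2/N" using e3 N by (simp add: field_simps)
    obtain D where D: "N = D + 1" "D > 0" using N by (metis add.commute diff_add_cancel diff_gt_0_iff_gt)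
    have "D \<noteq> 0" "D + 1 \<noteq> 0" using D by auto
    then have g: "- (1/2) * lg - Z\<^sup>2/(2*(N-1)) + c*Z/(N-1) - (c\<^sup>2/N)/(2*(N-1)) - \<gamma>
      = ((N-1)*(c\<^sup>2/N - lg - 2*\<gamma>) - (Z - c)\<^sup>2) / (2*(N-1))"
    proof -
      have ND: "N - 1 = D" using D by simp
      have "N \<noteq> 0" using D by simp
      show ?thesis unfolding ND using \<open>D \<noteq> 0\<close> \<open>N \<noteq> 0\<close>
        apply (simp add: field_simps power2_eq_square)
        apply (simp add: D(1) algebra_simps)
        done
    qed
    show ?thesis unfolding e1 e2 e4 Kv_def e5 by (rule g)
  qed
  note eq = this
  have iff1: "(\<gamma> \<le> - (1/2) * lg - N / (2 * (N - 1) * \<sigma>\<^sup>2) * (\<sigma>*Z/sqrt N)\<^sup>2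
      + N * d / ((N - 1) * \<sigma>\<^sup>2) * (\<sigma>*Z/sqrt N) - d\<^sup>2 / (2 * (N - 1) * \<sigma>\<^sup>2))
     \<longleftrightarrow> (Z - c)\<^sup>2 \<le> (N-1)*Kv"
    proof -
    have "0 < 2*(N-1)" using N by simp
    then show ?thesis using eq
      by (smt (verit) zero_le_divide_iff)
  qed
  have Kv0: "0 \<le> (N-1)*Kv" using K N unfolding Kv_def lg_def by simp
  have iff2: "(Z - c)\<^sup>2 \<le> (N-1)*Kv \<longleftrightarrow> \<bar>Z - c\<bar> \<le> sqrt ((N-1)*Kv)"
    by (metis real_sqrt_abs real_sqrt_le_iff)
  show ?thesis using iff1 iff2 unfolding lg_def[symmetric] l1 c_def[symmetric] Kv_def[symmetric] by linarith
qed

theorem lemma3p7: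
  fixes T n :: nat and \<mu> \<sigma> zs \<gamma> :: real
  assumes "T \<ge> 1" and "n \<ge> 1" and "n * T \<ge> 2" and "\<sigma> > 0"
    and "\<gamma> \<le> (1/2) * ((zs - \<mu>)\<^sup>2 / \<sigma>\<^sup>2 - ln ((real n * real T - 1) / (real n * real T)))"
  shows "let m = (zs - \<mu>)\<^sup>2 / \<sigma>\<^sup>2;
             N = real n * real T;
             a = sqrt (m * N);
             b = sqrt ((N - 1) * (m - ln (1 - 1 / N) - 2 * \<gamma>))
         in alpha_FO T n \<mu> \<sigma> zs \<gamma> = Phi (a + b) - Phi (a - b)"
proof -
  define N where "N = real n * real T"
  define d where "d = zs - \<mu>"
  define m where "m = d\<^sup>2 / \<sigma>\<^sup>2"
  define b where "b = sqrt ((N - 1) * (m - ln (1 - 1 / N) - 2 * \<gamma>))"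
  define c where "c = d * sqrt N / \<sigma>"
  define I where "I = idx T n"
  define N0 where "N0 = density lborel (normal_density \<mu> \<sigma>)"
  define M where "M = H0_law T n \<mu> \<sigma>"
  have sp: "\<sigma> > 0" by fact
  have N1: "N > 1"
  proof -
    have "real (n * T) \<ge> 2" using assms(3) by linarith
    then show ?thesis unfolding N_def by simp
  qed
  have finI: "finite I" and neI: "I \<noteq> {}" using assms(1,2) unfolding I_def idx_def by auto
  have cardI: "real (card I) = N" unfolding I_def idx_def N_def by (simp add: card_cartesian_product)
  have MM: "M = PiM I (\<lambda>_. N0)" unfolding M_def H0_law_def I_def N0_def ..
  have pM: "prob_space M" unfolding MM N0_def
    by (rule prob_space_PiM) (rule prob_space_normal_density, rule sp)
  interpret M: prob_space M by (rule pM)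
  define S where "S x = (\<Sum>i\<in>I. x i)" for x :: "nat \<times> nat \<Rightarrow> real"
  have sumsq: "sqrt (\<Sum>i\<in>I. \<sigma>\<^sup>2) = \<sigma> * sqrt N"
    using cardI sp by (simp add: real_sqrt_mult)
  have distS: "distributed M lborel S (normal_density (N * \<mu>) (\<sigma> * sqrt N))"
    using sum_coords_normal[OF finI neI sp, of \<mu>] cardI sumsq
    unfolding MM N0_def S_def by simp
  have sNp: "\<sigma> * sqrt N > 0" using sp N1 by simp
  define Z where "Z x = (S x - N * \<mu>) / (\<sigma> * sqrt N)" for x
  have distZ: "distributed M lborel Z std_normal_density"
    using distS M.normal_standard_normal_convert[OF sNp] unfolding Z_def[abs_def] by simp
  have muhat: "mu_hat T n x - \<mu> = \<sigma> * Z x / sqrt N" for x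
  proof -
    have "mu_hat T n x = S x / N"
      unfolding mu_hat_def S_def I_def idx_def N_def
      by (simp add: sum.cartesian_product)
    then show ?thesis unfolding Z_def using N1 sp
      by (simp add: field_simps)
  qed
  have K: "0 \<le> d\<^sup>2/\<sigma>\<^sup>2 - ln ((N-1)/N) - 2*\<gamma>"
    using assms(5) unfolding d_def N_def by simp
  have ev: "{X \<in> space M. L_FO T n \<mu> \<sigma> zs X \<ge> \<gamma>} = {x \<in> space M. c - b \<le> Z x \<and> Z x \<le> c + b}"
    unfolding L_FO_def Let_def N_def[symmetric] muhat d_def[symmetric] c_def b_def m_def
    using alg[OF N1 sp K] by simp
  have b0: "b \<ge> 0"
  proof -
    have "ln (1 - 1/N) = ln ((N-1)/N)" using N1 by (simp add: field_simps)
    then have "0 \<le> m - ln (1 - 1 / N) - 2 * \<gamma>" using K unfolding m_def by simp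
    then show ?thesis unfolding b_def using N1 by simp
  qed
  have a_eq: "sqrt (m * N) = \<bar>c\<bar>"
    unfolding m_def c_def using sp N1
    by (simp add: real_sqrt_mult real_sqrt_divide abs_mult)
  have alpha: "alpha_FO T n \<mu> \<sigma> zs \<gamma> = Phi (\<bar>c\<bar> + b) - Phi (\<bar>c\<bar> - b)"
  proof (cases "c \<ge> 0")
    case True
    have "alpha_FO T n \<mu> \<sigma> zs \<gamma> = measure M {x \<in> space M. c - b \<le> Z x \<and> Z x \<le> c + b}"
      unfolding alpha_FO_def M_def[symmetric] ev ..
    also have "\<dots> = Phi (c + b) - Phi (c - b)"
      unfolding Phi_def by (rule std_interval[OF pM distZ]) (use b0 in simp)
    finally show ?thesis using True by simp
  next
    case False
    have distZ': "distributed M lborel (\<lambda>x. 0 + (-1) * Z x) (normal_density (0 + (-1) * 0) (\<bar>-1\<bar> * 1))"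
      by (rule M.normal_density_affine[OF distZ]) auto
    then have distZ': "distributed M lborel (\<lambda>x. - Z x) std_normal_density" by simp
    have "alpha_FO T n \<mu> \<sigma> zs \<gamma> = measure M {x \<in> space M. c - b \<le> Z x \<and> Z x \<le> c + b}"
      unfolding alpha_FO_def M_def[symmetric] ev ..
    also have "\<dots> = measure M {x \<in> space M. -c - b \<le> - Z x \<and> - Z x \<le> -c + b}"
      by (rule arg_cong[where f="measure M"]) auto
    also have "\<dots> = Phi (-c + b) - Phi (-c - b)"
      unfolding Phi_def by (rule std_interval[OF pM distZ']) (use b0 in simp)
    finally show ?thesis using False by simp
  qed
  show ?thesis
    unfolding Let_def N_def[symmetric] d_def[symmetric] m_def[symmetric] b_def[symmetric] a_eq
    by (rule alpha)
qed

end
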